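(* Let $G$ be a graph, $B$ a hopping forcing set of $G$, and $\mathcal F$ a set of hopping forces of $B$ arising from a chronological list that colors all of $V(G)$ blue, and let $t=\operatorname{pt}_{\operatorname{H}}(G;\mathcal F)$. Then for every $i\in\{0,\ldots,t\}$, $$\mathcal F^{(t-i)}\subseteq \operatorname{Term}(\mathcal F)^{[i]},$$ where $\mathcal F^{(j)}$ is computed for the process starting from $B$ with forces $\mathcal F$, and $\operatorname{Term}(\mathcal F)^{[i]}$ is computed for the process starting from $\operatorname{Term}(\mathcal F)$ with forces $\operatorname{Rev}(\mathcal F)$.
   Context: All graphs are finite, simple and undirected. Hopping color change rule: a blue vertex $v$ may force a white vertex $w$ to become blue if $v$ has not previously performed a force and every neighbor of $v$ is blue. For an initial blue set $B$, a chronological list of forces of $B$ is a sequence of such forces applied one at a time until no further force is possible; its underlying unordered set is a set of forces of $B$. $B$ is a hopping forcing set if some chronological list of forces of $B$ turns all vertices blue. For an initial set $S$ and a set of forces $\mathcal E$ of $S$, let $\mathcal E^{(0)}=S$ and for $j\geq1$ let $\mathcal E^{(j)}$ be the set of vertices $w\notin U_{j-1}:=\bigcup_{i=0}^{j-1}\mathcal E^{(i)}$ for which there is $(v\to w)\in\mathcal E$ with $v\in U_{j-1}$ and all neighbors of $v$ in $U_{j-1}$; write $S^{[i]}=\bigcup_{j=0}^{i}\mathcal E^{(j)}$. $\operatorname{pt}_{\operatorname{H}}(G;\mathcal E)$ is the least $j$ with $S^{[j]}=V(G)$. $\operatorname{Rev}(\mathcal F)=\{w\to v:(v\to w)\in\mathcal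 F\}$ and $\operatorname{Term}(\mathcal F)$ is the set of vertices of $G$ performing no force in $\mathcal F$; $\operatorname{Rev}(\mathcal F)$ is a valid set of hopping forces of $\operatorname{Term}(\mathcal F)$. *)

theory Defs
  imports Main
begin

definition simple_graph :: "'a set \<Rightarrow> ('a \<Rightarrow> 'a \<Rightarrow> bool) \<Rightarrow> bool" where
  "simple_graph V adj \<longleftrightarrow> finite V \<and> (\<forall>x y. adj x y \<longrightarrow> x \<in> V \<and> y \<in> V)
     \<and> (\<forall>x y. adj x y \<longrightarrow> adj y x) \<and> (\<forall>x. \<not> adj x x)"

definition nbhd :: "('a \<Rightarrow> 'a \<Rightarrow> bool) \<Rightarrow> 'a \<Rightarrow> 'a set" where
  "nbhd adj v = {u. adj v u}"

text \<open>Single hopping force v -> w, given current blue set Bl and set U of vertices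
  that have already forced.\<close>
definition hop_can_force :: "'a set \<Rightarrow> ('a \<Rightarrow> 'a \<Rightarrow> bool) \<Rightarrow> 'a set \<Rightarrow> 'a set \<Rightarrow> 'a \<Rightarrow> 'a \<Rightarrow> bool" where
  "hop_can_force V adj Bl U v w \<longleftrightarrow> v \<in> Bl \<and> v \<notin> U \<and> nbhd adj v \<subseteq> Bl \<and> w \<in> V \<and> w \<notin> Bl"

fun hop_run :: "'a set \<Rightarrow> ('a \<Rightarrow> 'a \<Rightarrow> bool) \<Rightarrow> 'a set \<Rightarrow> 'a set \<Rightarrow> ('a \<times> 'a) list \<Rightarrow> bool" where
  "hop_run V adj Bl U [] \<longleftrightarrow> \<not> (\<exists>v w. hop_can_force V adj Bl U v w)"
| "hop_run V adj Bl U ((v, w) # fs) \<longleftrightarrow>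
     hop_can_force V adj Bl U v w \<and> hop_run V adj (insert w Bl) (insert v U) fs"

definition chrono_list :: "'a set \<Rightarrow> ('a \<Rightarrow> 'a \<Rightarrow> bool) \<Rightarrow> 'a set \<Rightarrow> ('a \<times> 'a) list \<Rightarrow> bool" where
  "chrono_list V adj B fs \<longleftrightarrow> B \<subseteq> V \<and> hop_run V adj B {} fs"

definition hopping_forcing_set :: "'a set \<Rightarrow> ('a \<Rightarrow> 'a \<Rightarrow> bool) \<Rightarrow> 'a set \<Rightarrow> bool" where
  "hopping_forcing_set V adj B \<longleftrightarrow> (\<exists>fs. chrono_list V adj B fs \<and> B \<union> snd ` set fs = V)"

fun cum :: "('a \<Rightarrow> 'a \<Rightarrow> bool) \<Rightarrow> 'a set \<Rightarrow> ('a \<times> 'a) set \<Rightarrow> nat \<Rightarrow> 'a set"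
and layer :: "('a \<Rightarrow> 'a \<Rightarrow> bool) \<Rightarrow> 'a set \<Rightarrow> ('a \<times> 'a) set \<Rightarrow> nat \<Rightarrow> 'a set" where
  "layer adj S F 0 = S"
| "layer adj S F (Suc j) =
     {w. w \<notin> cum adj S F j \<and> (\<exists>v. (v, w) \<in> F \<and> v \<in> cum adj S F j \<and> nbhd adj v \<subseteq> cum adj S F j)}"
| "cum adj S F 0 = layer adj S F 0"
| "cum adj S F (Suc j) = cum adj S F j \<union> layer adj S F (Suc j)"

definition pt_H :: "'a set \<Rightarrow> ('a \<Rightarrow> 'a \<Rightarrow> bool) \<Rightarrow> 'a set \<Rightarrow> ('a \<times> 'a) set \<Rightarrow> nat" where
  "pt_H V adj S F = (LEAST j. cum adj S F j = V)"

definition Rev :: "('a \<times> 'a) set \<Rightarrow> ('a \<times> 'a) set" where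
  "Rev F = {(w, v). (v, w) \<in> F}"

definition Term :: "'a set \<Rightarrow> ('a \<times> 'a) set \<Rightarrow> 'a set" where
  "Term V F = {v \<in> V. \<not> (\<exists>w. (v, w) \<in> F)}"

end

theory Submission
  imports Defs
begin

lemma cum_mono: "j \<le> j' \<Longrightarrow> cum adj S F j \<subseteq> cum adj S F j'"
  by (induction j') (auto simp: le_Suc_eq)

lemma layer_sub_cum: "layer adj S F j \<subseteq> cum adj S F j"
  by (cases j) auto

lemma run_facts: "hop_run V adj Bl U fs \<Longrightarrow> distinct (map snd fs) \<and> (\<forall>p\<in>set fs. snd p \<notin> Bl)"
  by (induction V adj Bl U fs rule: hop_run.induct) (fastforce simp: hop_can_force_def)+

lemma run_sim: "hop_run V adj Bl U fs \<Longrightarrow> set fs \<subseteq> F \<Longrightarrow> Bl \<subseteq> cum adj S F j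
   \<Longrightarrow> \<exists>j'. Bl \<union> snd ` set fs \<subseteq> cum adj S F j'"
proof (induction V adj Bl U fs arbitrary: j rule: hop_run.induct)
  case (1 V adj Bl U)
  then show ?case by auto
next
  case (2 V adj Bl U v w fs)
  from "2.prems" have hc: "hop_can_force V adj Bl U v w" and r: "hop_run V adj (insert w Bl) (insert v U) fs"
    and vw: "(v, w) \<in> F" and sf: "set fs \<subseteq> F" by auto
  from hc have v: "v \<in> Bl" and nb: "nbhd adj v \<subseteq> Bl" by (auto simp: hop_can_force_def)
  have "w \<in> cum adj S F (Suc j)"
  proof (cases "w \<in> cum adj S F j")
    case True then show ?thesis by simp
  next
    case False
    then have "w \<in> layer adj S F (Suc j)" using vw v nb "2.prems"(3) by auto
    then show ?thesis by simp
  qed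
  moreover have "Bl \<subseteq> cum adj S F (Suc j)" using "2.prems"(3) by auto
  ultimately have "insert w Bl \<subseteq> cum adj S F (Suc j)" by auto
  from "2.IH"[OF r sf this] obtain j' where "insert w Bl \<union> snd ` set fs \<subseteq> cum adj S F j'" by blast
  then show ?case by auto
qed

theorem lemma4p6:
  fixes V :: "'a set" and adj :: "'a \<Rightarrow> 'a \<Rightarrow> bool" and B :: "'a set"
    and fs :: "('a \<times> 'a) list" and F :: "('a \<times> 'a) set" and t i :: nat
  assumes "simple_graph V adj"
    and "hopping_forcing_set V adj B"
    and "chrono_list V adj B fs"
    and "B \<union> snd ` set fs = V"
    and "F = set fs"
    and "t = pt_H V adj B F"
    and "i \<le> t"
  shows "layer adj B F (t - i) \<subseteq> cum adj (Term V F) (Rev F) i"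
proof -
  have adjV: "\<And>x y. adj x y \<Longrightarrow> y \<in> V" and sym: "\<And>x y. adj x y \<Longrightarrow> adj y x"
    using assms(1) by (auto simp: simple_graph_def)
  from assms(3) have BV: "B \<subseteq> V" and run: "hop_run V adj B {} fs" by (auto simp: chrono_list_def)
  from run_facts[OF run] have dist: "distinct (map snd fs)" and notB: "\<forall>p\<in>set fs. snd p \<notin> B"
    by auto
  have FV: "\<And>v w. (v,w)\<in>F \<Longrightarrow> w \<in> V" using assms(4,5) by force
  have notB': "\<And>v w. (v,w)\<in>F \<Longrightarrow> w \<notin> B" using notB assms(5) by force
  have inj: "inj_on snd (set fs)" using dist by (simp add: distinct_map)
  have uniq: "\<And>v v' w. (v,w)\<in>F \<Longrightarrow> (v',w)\<in>F \<Longrightarrow> v = v'"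
    using inj assms(5) by (metis inj_on_def prod.inject snd_conv)
  have cumV: "cum adj B F j \<subseteq> V" for j
    by (induction j) (use BV FV in auto)
  obtain j0 where "B \<union> snd ` set fs \<subseteq> cum adj B F j0"
    using run_sim[OF run, of F B 0] assms(5) by auto
  then have "cum adj B F j0 = V" using cumV assms(4) by blast
  then have ct: "cum adj B F t = V" unfolding assms(6) pt_H_def by (rule LeastI)
  have F1: "\<And>v w j. (v,w)\<in>F \<Longrightarrow> w \<in> cum adj B F j \<Longrightarrow>
      \<exists>j'. Suc j' \<le> j \<and> v \<in> cum adj B F j' \<and> nbhd adj v \<subseteq> cum adj B F j'"
  proof -
    fix v w j assume vw: "(v,w)\<in>F" and "w \<in> cum adj B F j"
    then show "\<exists>j'. Suc j' \<le> j \<and> v \<in> cum adj B F j' \<and> nbhd adj v \<subseteq> cum adj B F j'"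
    proof (induction j)
      case 0 then show ?case using notB' by auto
    next
      case (Suc j)
      show ?case
      proof (cases "w \<in> cum adj B F j")
        case True then show ?thesis using Suc by (meson le_Suc_eq)
      next
        case False
        then have "w \<in> layer adj B F (Suc j)" using Suc.prems by simp
        then obtain v' where "(v',w)\<in>F" "v' \<in> cum adj B F j" "nbhd adj v' \<subseteq> cum adj B F j" by auto
        then show ?thesis using uniq[OF vw] by blast
      qed
    qed
  qed
  have F1': "\<And>v w k. (v,w)\<in>F \<Longrightarrow> w \<in> cum adj B F (t - k) \<Longrightarrow>
      t - k \<ge> 1 \<and> v \<in> cum adj B F (t - k - 1) \<and> nbhd adj v \<subseteq> cum adj B F (t - k - 1)"
  proof -
    fix v w k assume a: "(v,w)\<in>F" "w \<in> cum adj B F (t - k)"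
    from F1[OF a] obtain j' where j': "Suc j' \<le> t - k" "v \<in> cum adj B F j'" "nbhd adj v \<subseteq> cum adj B F j'"
      by blast
    have "cum adj B F j' \<subseteq> cum adj B F (t - k - 1)" using j'(1) by (intro cum_mono) arith
    then show "t - k \<ge> 1 \<and> v \<in> cum adj B F (t - k - 1) \<and> nbhd adj v \<subseteq> cum adj B F (t - k - 1)"
      using j' by auto
  qed
  have RQ: "x \<in> cum adj (Term V F) (Rev F) k"
    if Qk: "\<forall>v w. (v,w)\<in>F \<and> w \<notin> cum adj B F (t-k) \<longrightarrow> v \<in> cum adj (Term V F) (Rev F) k"
      and xV: "x \<in> V" and nx: "k < t \<Longrightarrow> x \<notin> cum adj B F (t-k-1)" for k x
  proof (cases "\<exists>w. (x,w)\<in>F")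
    case False
    then have "x \<in> cum adj (Term V F) (Rev F) 0" using xV by (simp add: Term_def)
    then show ?thesis using cum_mono[of 0 k adj "Term V F" "Rev F"] by blast
  next
    case True
    then obtain w where xw: "(x,w)\<in>F" by blast
    have "w \<notin> cum adj B F (t-k)"
    proof
      assume "w \<in> cum adj B F (t-k)"
      from F1'[OF xw this] have "1 \<le> t - k" "x \<in> cum adj B F (t - k - 1)" by auto
      moreover have "k < t" using \<open>1 \<le> t - k\<close> by arith
      ultimately show False using nx by blast
    qed
    then show ?thesis using Qk xw by blast
  qed
  have Q: "k \<le> t \<Longrightarrow> \<forall>v w. (v,w)\<in>F \<and> w \<notin> cum adj B F (t-k) \<longrightarrow> v \<in> cum adj (Term V F) (Rev F) k" for k
  proof (induction k)
    case 0 then show ?case using ct FV by auto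
  next
    case (Suc k)
    then have kt: "k < t" by simp
    have Qk: "\<forall>v w. (v,w)\<in>F \<and> w \<notin> cum adj B F (t-k) \<longrightarrow> v \<in> cum adj (Term V F) (Rev F) k"
      using Suc by simp
    show ?case
    proof (intro allI impI)
      fix v w assume a: "(v,w)\<in>F \<and> w \<notin> cum adj B F (t - Suc k)"
      show "v \<in> cum adj (Term V F) (Rev F) (Suc k)"
      proof (cases "v \<in> cum adj (Term V F) (Rev F) k")
        case True then show ?thesis by simp
      next
        case False
        have wR: "w \<in> cum adj (Term V F) (Rev F) k"
          by (rule RQ[OF Qk]) (use a FV in auto)
        have nR: "nbhd adj w \<subseteq> cum adj (Term V F) (Rev F) k"
        proof
          fix u assume "u \<in> nbhd adj w"
          then have uw: "adj w u" by (simp add: nbhd_def)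
          show "u \<in> cum adj (Term V F) (Rev F) k"
          proof (cases "\<exists>r. (u,r)\<in>F")
            case False
            then have "u \<in> cum adj (Term V F) (Rev F) 0" using adjV uw by (simp add: Term_def)
            then show ?thesis using cum_mono[of 0 k adj "Term V F" "Rev F"] by blast
          next
            case True
            then obtain r where ur: "(u,r)\<in>F" by blast
            have "r \<notin> cum adj B F (t-k)"
            proof
              assume "r \<in> cum adj B F (t-k)"
              from F1'[OF ur this] have "nbhd adj u \<subseteq> cum adj B F (t - k - 1)" by blast
              moreover have "w \<in> nbhd adj u" using sym[OF uw] by (simp add: nbhd_def)
              ultimately have "w \<in> cum adj B F (t - k - 1)" by blast
              moreover have "t - k - 1 = t - Suc k" by simp
              ultimately show False using a by simp
            qed
            then show ?thesis using Qk ur by blast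
          qed
        qed
        have "(w,v) \<in> Rev F" using a by (simp add: Rev_def)
        then have "v \<in> layer adj (Term V F) (Rev F) (Suc k)" using False wR nR
          unfolding layer.simps by blast
        then show ?thesis by simp
      qed
    qed
  qed
  show ?thesis
  proof
    fix x assume x: "x \<in> layer adj B F (t - i)"
    have "layer adj B F (t - i) \<subseteq> V" using layer_sub_cum[of adj B F "t-i"] cum_mono[of "t-i" t adj B F] ct by auto
    then have xV: "x \<in> V" using x by blast
    have nx: "x \<notin> cum adj B F (t-i-1)" if "i < t"
    proof -
      have "t - i = Suc (t-i-1)" using that by arith
      then have "x \<in> layer adj B F (Suc (t-i-1))" using x by simp
      then show ?thesis unfolding layer.simps by blast
    qed
    show "x \<in> cum adj (Term V F) (Rev F) i" by (rule RQ[OF Q[OF assms(7)] xV nx])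
  qed
qed

end
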